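(* Let $n,m,k,l$ be non-negative integers with $l\le k\le n$, $l\le m$ and $k-l\le n-m$, and set $M:=m-l$, $N:=n-m-k+l$. Let $\ket{\Xi_{n,m|k,l}}:=\ket{1}^{\otimes l}\otimes\ket{0}^{\otimes(k-l)}\otimes\ket{\Xi_{N+M,M}}\in(\mathbb{C}^2)^{\otimes n}$. Then $$S\bigl(\mathrm{av}_\pi[\Xi_{n,m|k,l}]\bigr)\ \ge\ S(\rho_{mix,n,m})-S(\rho_{mix,N+M,M})=\log\binom{n}{m}-\log\binom{n-k}{m-l}.$$
   Context: The Dicke state $\ket{\Xi_{N+M,M}}$ is $\binom{N+M}{M}^{-1/2}$ times the sum of all computational basis vectors of $(\mathbb{C}^2)^{\otimes(N+M)}$ with exactly $M$ ones. For integers $0\le b\le a$, $\rho_{mix,a,b}$ is the state on $(\mathbb{C}^2)^{\otimes a}$ equal to $\binom{a}{b}^{-1}$ times the sum of the projectors $\ket{\vec x}\bra{\vec x}$ over all computational basis vectors $\vec x$ with exactly $b$ ones. $\mathfrak{S}_n$ acts by $\pi(g)\ket{i_1\cdots i_n}=\ket{i_{g^{-1}(1)}\cdots i_{g^{-1}(n)}}$, $\mathrm{av}_\pi[\rho]:=\frac{1}{n!}\sum_{g}\pi(g)\rho\,\pi(g)^\dagger$, $\Xi_{n,m|k,l}$ is the projector onto $\ket{\Xi_{n,m|k,l}}$, and $S$ is the von Neumann entropy. *)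

theory Defs
  imports "Jordan_Normal_Form.Schur_Decomposition" "HOL-Combinatorics.Permutations"
    "HOL-Computational_Algebra.Polynomial"
begin

text \<open>States on (C^2)^{tensor a} are 2^a x 2^a complex matrices. Basis index i < 2^a
  encodes the bit string i_1...i_a, qubit 1 being the most significant bit.\<close>

definition qubit :: "nat \<Rightarrow> nat \<Rightarrow> nat \<Rightarrow> nat" where
  "qubit a i j = (i div 2 ^ (a - 1 - j)) mod 2"   (* j-th qubit (0-based) of index i *)

definition index_of_bits :: "nat \<Rightarrow> (nat \<Rightarrow> nat) \<Rightarrow> nat" where
  "index_of_bits a b = (\<Sum>j<a. b j * 2 ^ (a - 1 - j))"

definition weight :: "nat \<Rightarrow> nat \<Rightarrow> nat" where
  "weight a i = card {j. j < a \<and> qubit a i j = 1}"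

definition kron_vec :: "complex vec \<Rightarrow> complex vec \<Rightarrow> complex vec" where
  "kron_vec u v = vec (dim_vec u * dim_vec v) (\<lambda>i. u $ (i div dim_vec v) * v $ (i mod dim_vec v))"

definition ket0 :: "complex vec" where "ket0 = vec 2 (\<lambda>i. if i = 0 then 1 else 0)"
definition ket1 :: "complex vec" where "ket1 = vec 2 (\<lambda>i. if i = 1 then 1 else 0)"

fun tensor_pow :: "complex vec \<Rightarrow> nat \<Rightarrow> complex vec" where
  "tensor_pow v 0 = vec 1 (\<lambda>_. 1)"
| "tensor_pow v (Suc r) = kron_vec v (tensor_pow v r)"

definition dicke :: "nat \<Rightarrow> nat \<Rightarrow> complex vec" where
  "dicke a b = vec (2 ^ a) (\<lambda>i. if weight a i = b then complex_of_real (1 / sqrt (real (a choose b))) else 0)"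

definition Xi_vec :: "nat \<Rightarrow> nat \<Rightarrow> nat \<Rightarrow> nat \<Rightarrow> complex vec" where
  "Xi_vec n m k l = kron_vec (tensor_pow ket1 l)
      (kron_vec (tensor_pow ket0 (k - l)) (dicke (n - m - (k - l) + (m - l)) (m - l)))"

definition projector :: "complex vec \<Rightarrow> complex mat" where
  "projector v = mat (dim_vec v) (dim_vec v) (\<lambda>(i, j). v $ i * cnj (v $ j))"

definition rho_mix :: "nat \<Rightarrow> nat \<Rightarrow> complex mat" where
  "rho_mix a b = mat (2 ^ a) (2 ^ a)
     (\<lambda>(i, j). if i = j \<and> weight a i = b then complex_of_real (1 / real (a choose b)) else 0)"

definition perm_op :: "nat \<Rightarrow> (nat \<Rightarrow> nat) \<Rightarrow> complex mat" where
  "perm_op n g = mat (2 ^ n) (2 ^ n)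
     (\<lambda>(r, c). if r = index_of_bits n (\<lambda>j. qubit n c (inv_into UNIV g j)) then 1 else 0)"

definition av_pi :: "nat \<Rightarrow> complex mat \<Rightarrow> complex mat" where
  "av_pi n \<rho> = mat (2 ^ n) (2 ^ n) (\<lambda>(r, c).
     (1 / of_nat (fact n)) * (\<Sum>g\<in>{g. g permutes {..<n}}.
        (perm_op n g * \<rho> * mat_adjoint (perm_op n g)) $$ (r, c)))"

text \<open>von Neumann entropy -tr(rho ln rho), via the eigenvalues (with multiplicity) of rho;
  natural logarithm, and 0 ln 0 = 0 (ln 0 = 0 in Isabelle).\<close>
definition vn_entropy :: "complex mat \<Rightarrow> real" where
  "vn_entropy \<rho> = (\<Sum>x\<in># proots (char_poly \<rho>). - (Re x * ln (Re x)))"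

end

theory Submission
  imports Defs
begin


lemma qubit_Suc_Suc: "qubit (Suc a) c (Suc j) = qubit a c j" by (simp add: qubit_def)
lemma qubit_Suc_0: "qubit (Suc a) c 0 = c div 2^a mod 2" by (simp add: qubit_def)
lemma qubit_le1: "qubit a c j \<le> 1" by (simp add: qubit_def)
lemma qubit_01: "qubit a c j = 0 \<or> qubit a c j = 1" 
proof -
  have "c div 2 ^ (a - 1 - j) mod 2 < 2" by simp
  then show ?thesis unfolding qubit_def by linarith
qed

lemma index_of_bits_Suc:
  "index_of_bits (Suc a) b = b 0 * 2^a + index_of_bits a (\<lambda>j. b (Suc j))"
  unfolding index_of_bits_def by (subst sum.lessThan_Suc_shift) simp

lemma index_of_bits_cong: "(\<And>j. j < a \<Longrightarrow> b j = b' j) \<Longrightarrow> index_of_bits a b = index_of_bits a b'"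
  unfolding index_of_bits_def by (intro sum.cong) auto

lemma index_of_bits_qubit_mod: "index_of_bits a (qubit a c) = c mod 2^a"
proof (induction a)
  case 0 then show ?case by (simp add: index_of_bits_def)
next
  case (Suc a)
  have "index_of_bits (Suc a) (qubit (Suc a) c) = (c div 2^a mod 2) * 2^a + c mod 2^a"
    by (simp add: index_of_bits_Suc qubit_Suc_Suc qubit_Suc_0 Suc)
  also have "\<dots> = c mod 2^Suc a" by (metis mod_mult2_eq power_Suc2 mult.commute)
  finally show ?case .
qed

lemma index_of_bits_qubit: "c < 2^a \<Longrightarrow> index_of_bits a (qubit a c) = c"
  by (simp add: index_of_bits_qubit_mod)

lemma index_of_bits_less: "(\<And>j. j < a \<Longrightarrow> b j \<le> 1) \<Longrightarrow> index_of_bits a b < 2^a"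
proof (induction a arbitrary: b)
  case 0 then show ?case by (simp add: index_of_bits_def)
next
  case (Suc a)
  have "index_of_bits a (\<lambda>j. b (Suc j)) < 2^a" using Suc by auto
  moreover have "b 0 \<le> 1" using Suc by auto
  then have "b 0 * 2^a \<le> 1 * 2^a" by (intro mult_right_mono) auto
  ultimately have "b 0 * 2^a + index_of_bits a (\<lambda>j. b (Suc j)) < 2 * 2^a"
    by linarith
  then show ?case by (simp add: index_of_bits_Suc)
qed

lemma qubit_add_high: "j < a \<Longrightarrow> qubit a (x + y * 2^a) j = qubit a x j"
proof -
  assume j: "j < a"
  have aa: "a = (a-1-j) + Suc j" using j by arith
  have "(2::nat)^a = 2^((a-1-j) + Suc j)" using aa by metis
  also have "\<dots> = (2::nat)^(a-1-j) * 2 * 2^j" by (simp add: power_add)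
  finally have "2^a = (2::nat)^(a-1-j) * 2 * 2^j" .
  then have "x + y * 2^a = x + (y * 2^j * 2) * 2^(a-1-j)" by (simp add: algebra_simps)
  then have "(x + y * 2^a) div 2^(a-1-j) = (x + (y * 2^j * 2) * 2^(a-1-j)) div 2^(a-1-j)" by (rule arg_cong[where f="\<lambda>z. z div 2^(a-1-j)"])
  also have "\<dots> = x div 2^(a-1-j) + y * 2^j * 2" by simp
  finally have "(x + y * 2^a) div 2^(a-1-j) = x div 2^(a-1-j) + y * 2^j * 2" .
  then show ?thesis unfolding qubit_def by simp
qed

lemma qubit_index_of_bits: "(\<And>j. j < a \<Longrightarrow> b j \<le> 1) \<Longrightarrow> j < a \<Longrightarrow> qubit a (index_of_bits a b) j = b j"
proof (induction a arbitrary: b j)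
  case 0 then show ?case by simp
next
  case (Suc a)
  have lt: "index_of_bits a (\<lambda>j. b (Suc j)) < 2^a" using Suc.prems by (intro index_of_bits_less) auto
  show ?case
  proof (cases j)
    case 0
    have "(b 0 * 2^a + index_of_bits a (\<lambda>j. b (Suc j))) div 2^a = b 0" using lt by simp
    moreover have "b 0 \<le> 1" using Suc.prems by auto
    ultimately show ?thesis using 0 by (auto simp: index_of_bits_Suc qubit_Suc_0)
  next
    case (Suc j')
    then have "j' < a" using Suc.prems by auto
    then have "qubit a (index_of_bits a (\<lambda>j. b (Suc j)) + b 0 * 2^a) j' = b (Suc j')"
      using Suc.IH[of "\<lambda>j. b (Suc j)" j'] Suc.prems by (simp add: qubit_add_high)
    then show ?thesis using Suc by (simp add: index_of_bits_Suc qubit_Suc_Suc add.commute)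
  qed
qed



definition bitset :: "nat \<Rightarrow> nat \<Rightarrow> nat set" where
  "bitset a i = {j. j < a \<and> qubit a i j = 1}"
definition ind_of_set :: "nat \<Rightarrow> nat set \<Rightarrow> nat" where
  "ind_of_set a S = index_of_bits a (\<lambda>j. if j \<in> S then 1 else 0)"

lemma weight_bitset: "weight a i = card (bitset a i)"
  by (simp add: weight_def bitset_def)

lemma bitset_sub: "bitset a i \<subseteq> {..<a}" by (auto simp: bitset_def)
lemma bitset_lt: "j \<in> bitset a i \<Longrightarrow> j < a" by (auto simp: bitset_def)
lemma qubit_le_Suc0: "qubit a c j \<le> Suc 0" using qubit_le1 by simp
lemma finite_bitset[simp]: "finite (bitset a i)" using bitset_sub finite_subset by blast

lemma ind_of_set_less: "ind_of_set a S < 2^a"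
  unfolding ind_of_set_def by (rule index_of_bits_less) auto

lemma bitset_ind: "S \<subseteq> {..<a} \<Longrightarrow> bitset a (ind_of_set a S) = S"
  unfolding bitset_def ind_of_set_def
  by (auto simp: qubit_index_of_bits split: if_splits)

lemma ind_bitset: "i < 2^a \<Longrightarrow> ind_of_set a (bitset a i) = i"
proof -
  assume i: "i < 2^a"
  have "ind_of_set a (bitset a i) = index_of_bits a (qubit a i)"
    unfolding ind_of_set_def bitset_def
    by (rule index_of_bits_cong) (use qubit_01 in auto)
  then show ?thesis using index_of_bits_qubit[OF i] by simp
qed

lemma card_weight: "card {i. i < 2^a \<and> weight a i = b} = a choose b"
proof -
  have "bij_betw (bitset a) {i. i < 2^a \<and> weight a i = b} {S. S \<subseteq> {..<a} \<and> card S = b}"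
    by (rule bij_betw_byWitness[where f'="ind_of_set a"])
       (auto simp: ind_bitset bitset_ind weight_bitset ind_of_set_less bitset_sub dest: bitset_lt)
  then have "card {i. i < 2^a \<and> weight a i = b} = card {S. S \<subseteq> {..<a} \<and> card S = b}"
    by (rule bij_betw_same_card)
  also have "\<dots> = a choose b" using n_subsets[of "{..<a}" b] by simp
  finally show ?thesis .
qed

lemma qubit_split_hi: "j < a \<Longrightarrow> qubit (a+b) c j = qubit a (c div 2^b) j"
proof -
  assume j: "j < a"
  have "a + b - 1 - j = b + (a - 1 - j)" using j by arith
  then show ?thesis unfolding qubit_def by (simp add: power_add div_mult2_eq)
qed

lemma qubit_split_lo: "qubit (a+b) c (a+j) = qubit b c j"
  unfolding qubit_def by (simp add: diff_diff_add)

lemma qubit_mod: "j < b \<Longrightarrow> qubit b (c mod 2^b) j = qubit b c j"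
  using qubit_add_high[of j b "c mod 2^b" "c div 2^b"] mod_div_mult_eq[of c "2^b"] by simp

lemma weight_mod: "weight b (c mod 2^b) = weight b c"
  unfolding weight_def by (rule arg_cong[where f=card]) (auto simp: qubit_mod)

lemma weight_split: "weight (a+b) c = weight a (c div 2^b) + weight b c"
proof -
  have "bitset (a+b) c = bitset a (c div 2^b) \<union> (\<lambda>j. a + j) ` bitset b c"
  proof (rule Set.set_eqI)
    fix x show "x \<in> bitset (a+b) c \<longleftrightarrow> x \<in> bitset a (c div 2^b) \<union> (\<lambda>j. a + j) ` bitset b c"
    proof (cases "x < a")
      case True then show ?thesis by (auto simp: bitset_def qubit_split_hi)
    next
      case False
      then obtain j where x: "x = a + j" by (metis le_add_diff_inverse not_less)
      show ?thesis using False unfolding x by (auto simp: bitset_def qubit_split_lo)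
    qed
  qed
  moreover have "bitset a (c div 2^b) \<inter> (\<lambda>j. a + j) ` bitset b c = {}"
    by (auto simp: bitset_def)
  ultimately have "card (bitset (a+b) c) = card (bitset a (c div 2^b)) + card ((\<lambda>j. a + j) ` bitset b c)"
    by (simp add: card_Un_disjoint)
  also have "card ((\<lambda>j. a + j) ` bitset b c) = card (bitset b c)"
    by (rule card_image) (auto simp: inj_on_def)
  finally show ?thesis by (simp add: weight_bitset)
qed

lemma weight_zero: "weight a 0 = 0"
  by (simp add: weight_def qubit_def)

lemma divmod_aux: "(r::nat) < p \<Longrightarrow> (q * p + r) div p = q \<and> (q * p + r) mod p = r"
  by simp

lemma weight_ones: "weight a (2^a - 1) = a"
proof (induction a)
  case 0 then show ?case by (simp add: weight_def)
next
  case (Suc a)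
  have x: "(2::nat)^Suc a - 1 = 1 * 2^a + (2^a - 1)" by simp
  have "weight (1 + a) (2^Suc a - 1) = weight 1 ((2^Suc a - 1) div 2^a) + weight a (2^Suc a - 1)"
    by (rule weight_split)
  also have "(2^Suc a - 1) div 2^a = (1::nat)" unfolding x using divmod_aux[of "2^a - 1" "2^a" 1] by simp
  also have "weight a (2^Suc a - 1) = weight a ((2^Suc a - 1) mod 2^a)" by (simp add: weight_mod)
  also have "(2^Suc a - 1) mod 2^a = (2::nat)^a - 1" unfolding x using divmod_aux[of "2^a - 1" "2^a" 1] by simp
  also have "weight 1 1 = 1" by (simp add: weight_def qubit_def)
  finally show ?case using Suc by simp
qed

definition tau :: "nat \<Rightarrow> (nat \<Rightarrow> nat) \<Rightarrow> nat \<Rightarrow> nat" where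
  "tau n g c = index_of_bits n (\<lambda>j. qubit n c (inv_into UNIV g j))"

lemma tau_less: "tau n g c < 2^n"
  unfolding tau_def by (rule index_of_bits_less) (simp add: qubit_le_Suc0)

lemma qubit_tau: "j < n \<Longrightarrow> qubit n (tau n g c) j = qubit n c (inv_into UNIV g j)"
  unfolding tau_def by (rule qubit_index_of_bits) (auto simp: qubit_le_Suc0)

lemma tau_comp:
  assumes g: "g permutes {..<n}" and h: "h permutes {..<n}"
  shows "tau n g (tau n h c) = tau n (g \<circ> h) c"
proof -
  have inv: "inv_into UNIV (g \<circ> h) = inv_into UNIV h \<circ> inv_into UNIV g"
    using o_inv_distrib permutes_bij g h by blast
  show ?thesis unfolding tau_def[of n g] tau_def[of n "g \<circ> h"]
  proof (rule index_of_bits_cong)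
    fix j assume j: "j < n"
    have "inv_into UNIV g j < n" using permutes_in_image[OF permutes_inv[OF g]] j by auto
    then have "qubit n (tau n h c) (inv_into UNIV g j) = qubit n c (inv_into UNIV h (inv_into UNIV g j))" by (rule qubit_tau)
    then show "qubit n (tau n h c) (inv_into UNIV g j) = qubit n c (inv_into UNIV (g \<circ> h) j)" by (simp add: inv)
  qed
qed

lemma tau_id: "c < 2^n \<Longrightarrow> tau n id c = c"
  unfolding tau_def by (simp add: inv_id index_of_bits_qubit)

lemma tau_inv_tau:
  assumes g: "g permutes {..<n}" and c: "c < 2^n"
  shows "tau n (inv_into UNIV g) (tau n g c) = c"
  using tau_comp[OF permutes_inv[OF g] g] permutes_inv_o(2)[OF g] tau_id[OF c] by simp

lemma tau_inj: "g permutes {..<n} \<Longrightarrow> inj_on (tau n g) {..<2^n}"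
  by (metis inj_on_inverseI lessThan_iff tau_inv_tau)

lemma bitset_tau: 
  assumes g: "g permutes {..<n}"
  shows "bitset n (tau n g c) = g ` bitset n c"
proof (rule Set.set_eqI)
  fix j
  show "j \<in> bitset n (tau n g c) \<longleftrightarrow> j \<in> g ` bitset n c"
  proof
    assume "j \<in> bitset n (tau n g c)"
    then have j: "j < n" "qubit n c (inv_into UNIV g j) = 1" by (auto simp: bitset_def qubit_tau)
    have "inv_into UNIV g j < n" using permutes_in_image[OF permutes_inv[OF g]] j by auto
    then have "inv_into UNIV g j \<in> bitset n c" using j by (auto simp: bitset_def)
    then show "j \<in> g ` bitset n c" using permutes_inverses(1)[OF g] by (metis image_eqI)
  next
    assume "j \<in> g ` bitset n c"
    then obtain i where i: "i < n" "qubit n c i = 1" "j = g i" by (auto simp: bitset_def)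
    have "j < n" using permutes_in_image[OF g] i by auto
    moreover have "inv_into UNIV g j = i" using permutes_inverses(2)[OF g] i by simp
    ultimately show "j \<in> bitset n (tau n g c)" using i by (auto simp: bitset_def qubit_tau)
  qed
qed

lemma weight_tau: "g permutes {..<n} \<Longrightarrow> weight n (tau n g c) = weight n c"
proof -
  assume g: "g permutes {..<n}"
  have "inj_on g (bitset n c)" using permutes_inj[OF g] inj_on_subset by blast
  then show ?thesis by (simp add: weight_bitset bitset_tau[OF g] card_image)
qed



lemma tau_transitive:
  assumes a: "a < 2^n" and a': "a' < 2^n" and w: "weight n a = weight n a'"
  shows "\<exists>h. h permutes {..<n} \<and> tau n h a = a'"
proof -
  let ?S = "bitset n a" let ?T = "bitset n a'"
  have cS: "card ?S = card ?T" using w weight_bitset by simp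
  obtain f1 where f1: "bij_betw f1 ?S ?T"
    using finite_same_card_bij[OF finite_bitset finite_bitset cS] by blast
  have "card ({..<n} - ?S) = card ({..<n} - ?T)"
    using cS bitset_sub by (simp add: card_Diff_subset)
  then obtain f2 where f2: "bij_betw f2 ({..<n} - ?S) ({..<n} - ?T)"
    using finite_same_card_bij[of "{..<n} - ?S" "{..<n} - ?T"] by blast
  define h where "h = (\<lambda>j. if j \<in> ?S then f1 j else if j < n then f2 j else j)"
  have b1: "bij_betw h ?S ?T"
    using f1 by (rule bij_betw_cong[THEN iffD1, rotated]) (auto simp: h_def)
  have b2: "bij_betw h ({..<n} - ?S) ({..<n} - ?T)"
    using f2 by (rule bij_betw_cong[THEN iffD1, rotated]) (auto simp: h_def)
  have "bij_betw h (?S \<union> ({..<n} - ?S)) (?T \<union> ({..<n} - ?T))"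
    by (rule bij_betw_combine[OF b1 b2]) auto
  moreover have "?S \<union> ({..<n} - ?S) = {..<n}" "?T \<union> ({..<n} - ?T) = {..<n}"
    using bitset_sub by auto
  ultimately have "bij_betw h {..<n} {..<n}" by simp
  then have hp: "h permutes {..<n}"
    by (rule bij_imp_permutes) (auto simp: h_def dest: bitset_lt)
  have "tau n h a = index_of_bits n (qubit n a')"
    unfolding tau_def
  proof (rule index_of_bits_cong)
    fix j assume j: "j < n"
    let ?i = "inv_into UNIV h j"
    have i: "?i < n" using permutes_in_image[OF permutes_inv[OF hp]] j by auto
    have hi: "h ?i = j" using permutes_inverses(1)[OF hp] by simp
    have iff: "?i \<in> ?S \<longleftrightarrow> j \<in> ?T"
    proof
      assume "?i \<in> ?S" then show "j \<in> ?T" using bij_betw_apply[OF b1] hi by metis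
    next
      assume jT: "j \<in> ?T"
      show "?i \<in> ?S"
      proof (rule ccontr)
        assume "?i \<notin> ?S"
        then have "?i \<in> {..<n} - ?S" using i by auto
        then have "h ?i \<in> {..<n} - ?T" using bij_betw_apply[OF b2] by metis
        then show False using jT hi by auto
      qed
    qed
    have e1: "?i \<in> ?S \<longleftrightarrow> qubit n a ?i = 1" using i by (auto simp: bitset_def)
    have e2: "j \<in> ?T \<longleftrightarrow> qubit n a' j = 1" using j by (auto simp: bitset_def)
    show "qubit n a ?i = qubit n a' j"
      using iff e1 e2 qubit_01[of n a ?i] qubit_01[of n a' j] by auto
  qed
  then have "tau n h a = a'" using index_of_bits_qubit[OF a'] by simp
  then show ?thesis using hp by blast
qed

lemma tau_bij_W:
  assumes g: "g permutes {..<n}"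
  shows "bij_betw (tau n g) {i. i < 2^n \<and> weight n i = w} {i. i < 2^n \<and> weight n i = w}"
proof (rule bij_betw_byWitness[where f'="tau n (inv_into UNIV g)"])
  have gi: "inv_into UNIV g permutes {..<n}" using permutes_inv[OF g] .
  show "\<forall>a\<in>{i. i < 2 ^ n \<and> weight n i = w}. tau n (inv_into UNIV g) (tau n g a) = a"
    using tau_inv_tau[OF g] by auto
  show "\<forall>a\<in>{i. i < 2 ^ n \<and> weight n i = w}. tau n g (tau n (inv_into UNIV g) a) = a"
    using tau_comp[OF g gi] permutes_inv_o(1)[OF g] tau_id by auto
  show "tau n g ` {i. i < 2 ^ n \<and> weight n i = w} \<subseteq> {i. i < 2 ^ n \<and> weight n i = w}"
    using tau_less weight_tau[OF g] by auto
  show "tau n (inv_into UNIV g) ` {i. i < 2 ^ n \<and> weight n i = w} \<subseteq> {i. i < 2 ^ n \<and> weight n i = w}"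
    using tau_less weight_tau[OF gi] by auto
qed

lemma card_perms: "card {g. g permutes {..<n}} = fact n"
  using card_permutations[of "{..<n}" n] by simp

lemma sum_perm_tau:
  fixes f :: "nat \<Rightarrow> real"
  assumes a: "a < 2^n"
  shows "real (card {i. i < 2^n \<and> weight n i = weight n a}) * (\<Sum>g\<in>{g. g permutes {..<n}}. f (tau n g a))
       = fact n * (\<Sum>y\<in>{i. i < 2^n \<and> weight n i = weight n a}. f y)"
proof -
  let ?W = "{i. i < 2^n \<and> weight n i = weight n a}"
  let ?G = "{g. g permutes {..<n}}"
  have same: "(\<Sum>g\<in>?G. f (tau n g a')) = (\<Sum>g\<in>?G. f (tau n g a))" if a': "a' \<in> ?W" for a'
  proof -
    obtain h where h: "h permutes {..<n}" "tau n h a = a'"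
      using tau_transitive[OF a, of a'] a' by auto
    have "(\<Sum>g\<in>?G. f (tau n g a')) = (\<Sum>g\<in>?G. f (tau n (g \<circ> h) a))"
      using tau_comp[OF _ h(1)] h(2) by (intro sum.cong) auto
    also have "\<dots> = (\<Sum>g\<in>?G. f (tau n g a))"
      using sum_permutations_compose_right[OF h(1), of "\<lambda>g. f (tau n g a)"] by simp
    finally show ?thesis .
  qed
  have "real (card ?W) * (\<Sum>g\<in>?G. f (tau n g a)) = (\<Sum>a'\<in>?W. \<Sum>g\<in>?G. f (tau n g a'))"
    using same by simp
  also have "\<dots> = (\<Sum>g\<in>?G. \<Sum>a'\<in>?W. f (tau n g a'))" by (rule sum.swap)
  also have "\<dots> = (\<Sum>g\<in>?G. \<Sum>y\<in>?W. f y)"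
  proof (rule sum.cong[OF refl])
    fix g assume "g \<in> ?G"
    then have "bij_betw (tau n g) ?W ?W" using tau_bij_W by auto
    then show "(\<Sum>a'\<in>?W. f (tau n g a')) = (\<Sum>y\<in>?W. f y)"
      by (rule sum.reindex_bij_betw)
  qed
  also have "\<dots> = fact n * (\<Sum>y\<in>?W. f y)" using card_perms[of n] by simp
  finally show ?thesis .
qed



lemma dim_kron[simp]: "dim_vec (kron_vec u v) = dim_vec u * dim_vec v"
  by (simp add: kron_vec_def)

lemma kron_index: "i < dim_vec u * dim_vec v \<Longrightarrow>
   kron_vec u v $ i = u $ (i div dim_vec v) * v $ (i mod dim_vec v)"
  by (simp add: kron_vec_def)

lemma dim_tensor_pow[simp]: "dim_vec (tensor_pow v r) = dim_vec v ^ r"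
  by (induction r) auto

lemma dim_ket[simp]: "dim_vec ket0 = 2" "dim_vec ket1 = 2"
  by (simp_all add: ket0_def ket1_def)

lemma tensor_ket1: "i < 2^r \<Longrightarrow> tensor_pow ket1 r $ i = (if i = 2^r - 1 then 1 else 0)"
proof (induction r arbitrary: i)
  case 0 then show ?case by simp
next
  case (Suc r)
  have lt: "i div 2^r < 2" using Suc.prems by (simp add: less_mult_imp_div_less)
  have lt2: "i mod 2^r < 2^r" by simp
  have "tensor_pow ket1 (Suc r) $ i = ket1 $ (i div 2^r) * tensor_pow ket1 r $ (i mod 2^r)"
    using Suc.prems by (simp add: kron_index)
  also have "\<dots> = (if i div 2^r = 1 \<and> i mod 2^r = 2^r - 1 then 1 else 0)"
    using lt lt2 Suc.IH[OF lt2] by (simp add: ket1_def)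
  also have "(i div 2^r = 1 \<and> i mod 2^r = 2^r - 1) \<longleftrightarrow> i = 2^Suc r - 1"
  proof
    assume h: "i div 2^r = 1 \<and> i mod 2^r = 2^r - 1"
    have "i = (i div 2^r) * 2^r + i mod 2^r" by (rule div_mult_mod_eq[symmetric])
    then show "i = 2^Suc r - 1" using h by simp
  next
    assume h: "i = 2^Suc r - 1"
    then have "i = 1 * 2^r + (2^r - 1)" by simp
    then show "i div 2^r = 1 \<and> i mod 2^r = 2^r - 1"
      using divmod_aux[of "2^r - 1" "2^r" 1] by simp
  qed
  finally show ?case .
qed

lemma tensor_ket0: "i < 2^r \<Longrightarrow> tensor_pow ket0 r $ i = (if i = 0 then 1 else 0)"
proof (induction r arbitrary: i)
  case 0 then show ?case by simp
next
  case (Suc r)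
  have lt: "i div 2^r < 2" using Suc.prems by (simp add: less_mult_imp_div_less)
  have lt2: "i mod 2^r < 2^r" by simp
  have "tensor_pow ket0 (Suc r) $ i = ket0 $ (i div 2^r) * tensor_pow ket0 r $ (i mod 2^r)"
    using Suc.prems by (simp add: kron_index)
  also have "\<dots> = (if i div 2^r = 0 \<and> i mod 2^r = 0 then 1 else 0)"
    using lt lt2 Suc.IH[OF lt2] by (simp add: ket0_def)
  also have "(i div 2^r = 0 \<and> i mod 2^r = 0) \<longleftrightarrow> i = 0"
  proof
    assume h: "i div 2^r = 0 \<and> i mod 2^r = 0"
    have "i = (i div 2^r) * 2^r + i mod 2^r" by (rule div_mult_mod_eq[symmetric])
    then show "i = 0" using h by simp
  qed simp
  finally show ?case .
qed

lemma dim_dicke[simp]: "dim_vec (dicke a b) = 2^a" by (simp add: dicke_def)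

lemma dicke_index: "d < 2^a \<Longrightarrow> dicke a b $ d =
   (if weight a d = b then complex_of_real (1 / sqrt (real (a choose b))) else 0)"
  by (simp add: dicke_def)

context
  fixes n m k l :: nat
  assumes lk: "l \<le> k" and kn: "k \<le> n" and lm: "l \<le> m" and klnm: "k - l \<le> n - m" and mn: "m \<le> n"
begin

definition PP :: nat where "PP = (2^l - 1) * 2^(k-l)"
definition AA :: "nat set" where "AA = {c. c < 2^n \<and> c div 2^(n-k) = PP \<and> weight (n-k) (c mod 2^(n-k)) = m - l}"
definition CC :: nat where "CC = (n - k) choose (m - l)"

lemma NM: "n - m - (k - l) + (m - l) = n - k"
proof -
  obtain M' where m: "m = l + M'" using lm le_Suc_ex by blast
  obtain K' where k: "k = l + K'" using lk le_Suc_ex by blast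
  obtain R where n: "n = m + R" using mn le_Suc_ex by blast
  obtain N' where R: "R = K' + N'" using klnm le_Suc_ex k n by auto
  show ?thesis unfolding n R m k by simp
qed

lemma dim_psi: "dim_vec (Xi_vec n m k l) = 2^n"
proof -
  have "dim_vec (Xi_vec n m k l) = 2^l * (2^(k-l) * 2^(n-k))"
    unfolding Xi_vec_def NM by simp
  also have "\<dots> = 2^(l + (k-l) + (n-k))" by (simp add: power_add)
  also have "l + (k-l) + (n-k) = n" using lk kn by arith
  finally show ?thesis .
qed

lemma pow_n: "(2::nat)^n = 2^l * (2^(k-l) * 2^(n-k))"
proof -
  have "l + (k-l) + (n-k) = n" using lk kn by arith
  then show ?thesis by (metis power_add mult.assoc)
qed

lemma pow_k: "(2::nat)^k = 2^l * 2^(k-l)"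
proof -
  have "l + (k-l) = k" using lk by arith
  then show ?thesis by (metis power_add)
qed

lemma psi_index:
  assumes c: "c < 2^n"
  shows "Xi_vec n m k l $ c = (if c \<in> AA then complex_of_real (1 / sqrt (real CC)) else 0)"
proof -
  define p :: nat where "p = 2^(n-k)"
  define q :: nat where "q = 2^(k-l)"
  have p0: "p > 0" and q0: "q > 0" by (simp_all add: p_def q_def)
  have cn: "c < 2^l * (q * p)" using c pow_n by (simp add: p_def q_def)
  define T1 where "T1 = tensor_pow ket1 l"
  define T0 where "T0 = tensor_pow ket0 (k - l)"
  define D where "D = dicke (n - k) (m - l)"
  have dT1: "dim_vec T1 = 2^l" by (simp add: T1_def)
  have dT0: "dim_vec T0 = q" by (simp add: T0_def q_def)
  have dD: "dim_vec D = p" by (simp add: D_def p_def)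
  have X: "Xi_vec n m k l = kron_vec T1 (kron_vec T0 D)"
    unfolding Xi_vec_def NM T1_def T0_def D_def ..
  have dK: "dim_vec (kron_vec T0 D) = q * p" by (simp add: dT0 dD)
  have cm: "c mod (q * p) < q * p" using p0 q0 by simp
  have "Xi_vec n m k l $ c = T1 $ (c div (q * p)) * kron_vec T0 D $ (c mod (q * p))"
    unfolding X using kron_index[of c T1 "kron_vec T0 D"] cn dT1 dK by simp
  also have "kron_vec T0 D $ (c mod (q * p)) = T0 $ ((c mod (q * p)) div p) * D $ ((c mod (q * p)) mod p)"
    using kron_index[of "c mod (q * p)" T0 D] cm dT0 dD by simp
  finally have "Xi_vec n m k l $ c = tensor_pow ket1 l $ (c div (q * p)) *
      (tensor_pow ket0 (k - l) $ ((c mod (q * p)) div p) * dicke (n - k) (m - l) $ ((c mod (q * p)) mod p))"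
    by (simp add: T1_def T0_def D_def)
  also have "c div (q * p) = c div p div q" by (simp add: div_mult2_eq mult.commute)
  also have "(c mod (q * p)) div p = c div p mod q"
    using mod_mult2_eq[of c p q] p0 by (simp add: mult.commute)
  also have "(c mod (q * p)) mod p = c mod p"
    by (simp add: mod_mod_cancel)
  finally have e: "Xi_vec n m k l $ c = tensor_pow ket1 l $ (c div p div q) *
      (tensor_pow ket0 (k - l) $ (c div p mod q) * dicke (n - k) (m - l) $ (c mod p))" .
  have b1: "c div p div q < 2^l" using cn by (simp add: div_mult2_eq[symmetric] less_mult_imp_div_less mult.commute)
  have b2: "c div p mod q < 2^(k-l)" using q0 by (simp add: q_def)
  have b3: "c mod p < 2^(n-k)" using p0 by (simp add: p_def)
  have iff: "(c div p div q = 2^l - 1 \<and> c div p mod q = 0) \<longleftrightarrow> c div p = PP"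
  proof
    assume h: "c div p div q = 2^l - 1 \<and> c div p mod q = 0"
    have "c div p = (c div p div q) * q + c div p mod q" by (rule div_mult_mod_eq[symmetric])
    then show "c div p = PP" using h by (simp add: PP_def q_def)
  next
    assume h: "c div p = PP"
    then show "c div p div q = 2^l - 1 \<and> c div p mod q = 0"
      using q0 by (simp add: PP_def q_def)
  qed
  have t1: "tensor_pow ket1 l $ (c div p div q) = (if c div p div q = 2^l - 1 then 1 else 0)"
    using tensor_ket1[OF b1] .
  have t0: "tensor_pow ket0 (k - l) $ (c div p mod q) = (if c div p mod q = 0 then 1 else 0)"
    using tensor_ket0[OF b2] .
  have dk: "dicke (n - k) (m - l) $ (c mod p) = (if weight (n - k) (c mod p) = m - l
      then complex_of_real (1 / sqrt (real CC)) else 0)"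
    using dicke_index[OF b3] by (simp add: CC_def)
  have inA: "c \<in> AA \<longleftrightarrow> c div p = PP \<and> weight (n - k) (c mod p) = m - l"
    using c by (simp add: AA_def p_def)
  show ?thesis
  proof (cases "c \<in> AA")
    case True
    then show ?thesis unfolding e t1 t0 dk using inA iff by simp
  next
    case False
    then have "\<not> (c div p div q = 2^l - 1 \<and> c div p mod q = 0) \<or> weight (n - k) (c mod p) \<noteq> m - l"
      using inA iff False by meson
    then show ?thesis unfolding e t1 t0 dk using False by auto
  qed
qed

lemma PP_less: "PP < 2^k"
proof -
  have "PP < 2^l * 2^(k-l)" unfolding PP_def by (simp add: algebra_simps)
  then show ?thesis using pow_k by simp
qed

lemma card_AA: "card AA = CC"
proof -
  define p :: nat where "p = 2^(n-k)"
  have p0: "p > 0" by (simp add: p_def)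
  have pn: "2^n = 2^k * p" unfolding p_def using kn by (simp add: power_add[symmetric])
  have "bij_betw (\<lambda>d. PP * p + d) {d. d < 2^(n-k) \<and> weight (n-k) d = m - l} AA"
  proof (rule bij_betw_byWitness[where f'="\<lambda>c. c mod p"])
    show "\<forall>a\<in>{d. d < 2 ^ (n - k) \<and> weight (n - k) d = m - l}. (PP * p + a) mod p = a"
      by (auto simp: p_def)
    show "\<forall>a'\<in>AA. PP * p + a' mod p = a'"
    proof
      fix c assume "c \<in> AA"
      then have "c div p = PP" by (simp add: AA_def p_def)
      moreover have "c = (c div p) * p + c mod p" by (rule div_mult_mod_eq[symmetric])
      ultimately show "PP * p + c mod p = c" by simp
    qed
    show "(\<lambda>d. PP * p + d) ` {d. d < 2 ^ (n - k) \<and> weight (n - k) d = m - l} \<subseteq> AA"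
    proof
      fix x assume "x \<in> (\<lambda>d. PP * p + d) ` {d. d < 2 ^ (n - k) \<and> weight (n - k) d = m - l}"
      then obtain d where d: "d < p" "weight (n-k) d = m - l" "x = PP * p + d" by (auto simp: p_def)
      have "PP + 1 \<le> 2^k" using PP_less by simp
      then have "(PP + 1) * p \<le> 2^k * p" by (rule mult_right_mono) simp
      then have "x < 2^n" using d pn by (simp add: algebra_simps)
      moreover have "x div p = PP" "x mod p = d" using d divmod_aux[of d p PP] by (simp_all add: mult.commute)
      ultimately show "x \<in> AA" using d by (simp add: AA_def p_def)
    qed
    show "(\<lambda>c. c mod p) ` AA \<subseteq> {d. d < 2 ^ (n - k) \<and> weight (n - k) d = m - l}"
      by (auto simp: AA_def p_def)
  qed
  then have "card {d. d < 2^(n-k) \<and> weight (n-k) d = m - l} = card AA"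
    by (rule bij_betw_same_card)
  then show ?thesis by (simp add: card_weight CC_def)
qed

lemma AA_weight: "c \<in> AA \<Longrightarrow> weight n c = m"
proof -
  assume c: "c \<in> AA"
  have wP: "weight k PP = l"
  proof -
    have "weight (l + (k-l)) PP = weight l (PP div 2^(k-l)) + weight (k-l) PP" by (rule weight_split)
    also have "PP div 2^(k-l) = 2^l - 1" by (simp add: PP_def)
    also have "weight (k-l) PP = weight (k-l) (PP mod 2^(k-l))" by (simp add: weight_mod)
    also have "PP mod 2^(k-l) = 0" by (simp add: PP_def)
    finally show ?thesis using lk weight_ones[of l] by (simp add: weight_zero)
  qed
  have "weight (k + (n-k)) c = weight k (c div 2^(n-k)) + weight (n-k) c" by (rule weight_split)
  also have "weight (n-k) c = weight (n-k) (c mod 2^(n-k))" by (simp add: weight_mod)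
  finally show ?thesis using c wP kn lm by (simp add: AA_def)
qed

lemma AA_sub: "AA \<subseteq> {..<2^n}" by (auto simp: AA_def)

lemma CC_pos: "CC > 0"
proof -
  have "m - l \<le> n - k" by (metis NM le_add2)
  then show ?thesis unfolding CC_def by simp
qed

end



lemma adjoint_index:
  assumes "A \<in> carrier_mat nr nc" "i < nc" "j < nr"
  shows "mat_adjoint (A :: complex mat) $$ (i, j) = cnj (A $$ (j, i))"
  using assms unfolding mat_adjoint_def
  by (simp add: mat_of_rows_index)

lemma adjoint_carrier:
  assumes "A \<in> carrier_mat nr nc"
  shows "mat_adjoint (A :: complex mat) \<in> carrier_mat nc nr"
  using assms unfolding mat_adjoint_def by auto

lemma perm_op_carrier: "perm_op n g \<in> carrier_mat (2^n) (2^n)"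
  by (simp add: perm_op_def)

lemma perm_op_index: "r < 2^n \<Longrightarrow> c < 2^n \<Longrightarrow> perm_op n g $$ (r, c) = (if r = tau n g c then 1 else 0)"
  by (simp add: perm_op_def tau_def)

lemma tau_iff:
  assumes g: "g permutes {..<n}" and r: "r < 2^n" and a: "a < 2^n"
  shows "r = tau n g a \<longleftrightarrow> a = tau n (inv_into UNIV g) r"
proof
  assume "r = tau n g a" then show "a = tau n (inv_into UNIV g) r" using tau_inv_tau[OF g a] by simp
next
  assume h: "a = tau n (inv_into UNIV g) r"
  have "tau n g (tau n (inv_into UNIV g) r) = r"
    using tau_comp[OF g permutes_inv[OF g]] permutes_inv_o(1)[OF g] tau_id[OF r] by simp
  then show "r = tau n g a" using h by simp
qed

lemma tau_bij: "g permutes {..<n} \<Longrightarrow> bij_betw (tau n g) {..<2^n} {..<2^n}"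
proof (rule bij_betw_byWitness[where f'="tau n (inv_into UNIV g)"])
  assume g: "g permutes {..<n}"
  show "\<forall>a\<in>{..<2 ^ n}. tau n (inv_into UNIV g) (tau n g a) = a"
    using tau_inv_tau[OF g] by auto
  show "\<forall>a\<in>{..<2 ^ n}. tau n g (tau n (inv_into UNIV g) a) = a"
    using tau_comp[OF g permutes_inv[OF g]] permutes_inv_o(1)[OF g] tau_id by auto
  show "tau n g ` {..<2 ^ n} \<subseteq> {..<2 ^ n}" using tau_less by auto
  show "tau n (inv_into UNIV g) ` {..<2 ^ n} \<subseteq> {..<2 ^ n}" using tau_less by auto
qed

lemma delta_sum:
  assumes g: "g permutes {..<n}" and r: "r < 2^n"
  shows "(\<Sum>a = 0..<2^n. (if r = tau n g a then 1 else 0) * (X a :: complex)) = X (tau n (inv_into UNIV g) r)"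
proof -
  have "(\<Sum>a = 0..<2^n. (if r = tau n g a then 1 else 0) * X a)
      = (\<Sum>a = 0..<2^n. if a = tau n (inv_into UNIV g) r then X a else 0)"
    using tau_iff[OF g r] by (intro sum.cong) auto
  also have "\<dots> = X (tau n (inv_into UNIV g) r)" using tau_less[of n "inv_into UNIV g" r] by simp
  finally show ?thesis .
qed

context
  fixes n :: nat and psi :: "complex vec"
  assumes dpsi: "dim_vec psi = 2^n"
begin

lemma proj_carrier: "projector psi \<in> carrier_mat (2^n) (2^n)"
  by (simp add: projector_def dpsi)

lemma proj_index: "a < 2^n \<Longrightarrow> b < 2^n \<Longrightarrow> projector psi $$ (a, b) = psi $ a * cnj (psi $ b)"
  by (simp add: projector_def dpsi)

lemma conj_entry:
  assumes g: "g permutes {..<n}" and r: "r < 2^n" and c: "c < 2^n"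
  shows "(perm_op n g * projector psi * mat_adjoint (perm_op n g)) $$ (r, c)
     = psi $ (tau n (inv_into UNIV g) r) * cnj (psi $ (tau n (inv_into UNIV g) c))"
proof -
  let ?P = "perm_op n g" and ?Q = "projector psi"
  let ?t = "tau n (inv_into UNIV g)"
  have cP: "?P \<in> carrier_mat (2^n) (2^n)" by (rule perm_op_carrier)
  have cQ: "?Q \<in> carrier_mat (2^n) (2^n)" by (rule proj_carrier)
  have cA: "mat_adjoint ?P \<in> carrier_mat (2^n) (2^n)" by (rule adjoint_carrier[OF cP])
  have PQ: "(?P * ?Q) $$ (r, b) = psi $ (?t r) * cnj (psi $ b)" if b: "b < 2^n" for b
  proof -
    have "(?P * ?Q) $$ (r, b) = (\<Sum>a = 0..<2^n. ?P $$ (r, a) * ?Q $$ (a, b))"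
      using cP cQ r b by (simp add: scalar_prod_def)
    also have "\<dots> = (\<Sum>a = 0..<2^n. (if r = tau n g a then 1 else 0) * (psi $ a * cnj (psi $ b)))"
      using r b by (intro sum.cong) (auto simp: perm_op_index proj_index)
    also have "\<dots> = psi $ (?t r) * cnj (psi $ b)" by (rule delta_sum[OF g r])
    finally show ?thesis .
  qed
  have dPQ: "dim_row (?P * ?Q) = 2^n" "dim_col (?P * ?Q) = 2^n" using cP cQ by auto
  have "(?P * ?Q * mat_adjoint ?P) $$ (r, c) = row (?P * ?Q) r \<bullet> col (mat_adjoint ?P) c"
    using dPQ cA r c by (intro index_mult_mat(1)) auto
  also have "\<dots> = (\<Sum>b = 0..<2^n. (?P * ?Q) $$ (r, b) * mat_adjoint ?P $$ (b, c))"
    unfolding scalar_prod_def using dPQ cA r c by (intro sum.cong) auto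
  also have "\<dots> = (\<Sum>b = 0..<2^n. (if c = tau n g b then 1 else 0) * (psi $ (?t r) * cnj (psi $ b)))"
  proof (intro sum.cong refl)
    fix b :: nat assume b: "b \<in> {0..<2^n}"
    then have "mat_adjoint ?P $$ (b, c) = cnj (?P $$ (c, b))" using adjoint_index[OF cP] c by simp
    also have "\<dots> = (if c = tau n g b then 1 else 0)" using b c by (simp add: perm_op_index)
    finally show "(?P * ?Q) $$ (r, b) * mat_adjoint ?P $$ (b, c) = (if c = tau n g b then 1 else 0) * (psi $ (?t r) * cnj (psi $ b))"
      using PQ b by simp
  qed
  also have "\<dots> = psi $ (?t r) * cnj (psi $ (?t c))" by (rule delta_sum[OF g c])
  finally show ?thesis .
qed

lemma av_carrier: "av_pi n (projector psi) \<in> carrier_mat (2^n) (2^n)"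
  by (simp add: av_pi_def)

lemma av_index:
  assumes r: "r < 2^n" and c: "c < 2^n"
  shows "av_pi n (projector psi) $$ (r, c) = (1 / of_nat (fact n)) *
     (\<Sum>g\<in>{g. g permutes {..<n}}. psi $ (tau n (inv_into UNIV g) r) * cnj (psi $ (tau n (inv_into UNIV g) c)))"
  using r c by (simp add: av_pi_def conj_entry)

end



lemma cs_sum:
  fixes u :: "'b \<Rightarrow> real"
  assumes S: "finite S"
  shows "(\<Sum>i\<in>S. u i)^2 \<le> real (card S) * (\<Sum>i\<in>S. (u i)^2)"
proof -
  have inner: "(\<Sum>j\<in>S. (u i - u j)^2) = real (card S) * (u i)^2 + (\<Sum>j\<in>S. (u j)^2) - 2 * u i * (\<Sum>j\<in>S. u j)" for i
  proof -
    have "(\<Sum>j\<in>S. (u i - u j)^2) = (\<Sum>j\<in>S. (u i)^2 + ((u j)^2 - 2 * u i * u j))"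
      by (intro sum.cong) (auto simp: power2_diff)
    also have "\<dots> = real (card S) * (u i)^2 + ((\<Sum>j\<in>S. (u j)^2) - 2 * u i * (\<Sum>j\<in>S. u j))"
      by (simp add: sum.distrib sum_subtractf sum_distrib_left)
    finally show ?thesis by simp
  qed
  have "0 \<le> (\<Sum>i\<in>S. \<Sum>j\<in>S. (u i - u j)^2)" by (intro sum_nonneg) auto
  also have "\<dots> = (\<Sum>i\<in>S. real (card S) * (u i)^2 + ((\<Sum>j\<in>S. (u j)^2) - 2 * (\<Sum>j\<in>S. u j) * u i))"
    using inner by (intro sum.cong) (auto simp: algebra_simps)
  also have "\<dots> = real (card S) * (\<Sum>i\<in>S. (u i)^2) + (real (card S) * (\<Sum>j\<in>S. (u j)^2) - 2 * (\<Sum>j\<in>S. u j) * (\<Sum>i\<in>S. u i))"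
    by (simp add: sum.distrib sum_subtractf sum_distrib_left)
  finally show ?thesis by (simp add: power2_eq_square)
qed

lemma weight_le: "weight n a \<le> n"
proof -
  have "card (bitset n a) \<le> card {..<n}" by (rule card_mono) (auto simp: bitset_sub)
  then show ?thesis by (simp add: weight_bitset)
qed

context
  fixes n m :: nat and psi :: "complex vec" and A :: "nat set" and al :: real
  assumes dpsi: "dim_vec psi = 2^n"
  and psiA: "\<And>a. a < 2^n \<Longrightarrow> psi $ a = (if a \<in> A then complex_of_real al else 0)"
  and Asub: "A \<subseteq> {..<2^n}"
  and Aw: "\<And>a. a \<in> A \<Longrightarrow> weight n a = m"
  and alpos: "al > 0" and alA: "al^2 * real (card A) = 1"
begin

lemma finA: "finite A" using Asub finite_subset by blast

lemma psi_sq: "a < 2^n \<Longrightarrow> psi $ a * cnj (psi $ a) = (if a \<in> A then complex_of_real (al^2) else 0)"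
  using psiA by (simp add: power2_eq_square)

lemma sum_psi_sq: "(\<Sum>a=0..<2^n. psi $ a * cnj (psi $ a)) = 1"
proof -
  have "(\<Sum>a=0..<2^n. psi $ a * cnj (psi $ a)) = (\<Sum>a=0..<2^n. if a \<in> A then complex_of_real (al^2) else 0)"
    by (intro sum.cong) (auto simp: psi_sq)
  also have "\<dots> = (\<Sum>a\<in>{0..<2^n} \<inter> A. complex_of_real (al^2))"
    by (rule sym, rule sum.inter_restrict) simp
  also have "{0..<2^n} \<inter> A = A" using Asub by auto
  also have "(\<Sum>a\<in>A. complex_of_real (al^2)) = complex_of_real (al^2 * real (card A))" by simp
  finally show ?thesis using alA by simp
qed

lemma mn: "m \<le> n"
proof -
  have "card A \<noteq> 0" using alA by (metis mult_zero_right of_nat_0 zero_neq_one)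
  then obtain a where "a \<in> A" by (metis all_not_in_conv card.empty)
  then show ?thesis using Aw weight_le by metis
qed

lemma sig_carrier: "av_pi n (projector psi) \<in> carrier_mat (2^n) (2^n)"
  by (rule av_carrier[OF dpsi])

lemma trace_sig: "(\<Sum>r=0..<2^n. av_pi n (projector psi) $$ (r, r)) = 1"
proof -
  let ?G = "{g. g permutes {..<n}}"
  let ?h = "\<lambda>a. psi $ a * cnj (psi $ a)"
  have "(\<Sum>r=0..<2^n. av_pi n (projector psi) $$ (r, r))
      = (\<Sum>r=0..<2^n. (1 / of_nat (fact n)) * (\<Sum>g\<in>?G. ?h (tau n (inv_into UNIV g) r)))"
    by (intro sum.cong) (auto simp: av_index[OF dpsi])
  also have "\<dots> = (1 / of_nat (fact n)) * (\<Sum>g\<in>?G. \<Sum>r=0..<2^n. ?h (tau n (inv_into UNIV g) r))"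
    by (simp add: sum_distrib_left sum.swap[of _ ?G])
  also have "\<dots> = (1 / of_nat (fact n)) * (\<Sum>g\<in>?G. \<Sum>a=0..<2^n. ?h a)"
  proof -
    have "(\<Sum>r=0..<2^n. ?h (tau n (inv_into UNIV g) r)) = (\<Sum>a=0..<2^n. ?h a)" if g: "g \<in> ?G" for g
    proof -
      have "bij_betw (tau n (inv_into UNIV g)) {..<2^n} {..<2^n}"
        using tau_bij permutes_inv g by blast
      then show ?thesis unfolding atLeast0LessThan by (rule sum.reindex_bij_betw)
    qed
    then show ?thesis by simp
  qed
  also have "\<dots> = 1" using sum_psi_sq card_perms[of n] by simp
  finally show ?thesis .
qed


lemma eig_bound:
  assumes ev: "eigenvector (av_pi n (projector psi)) v x"
  shows "x = complex_of_real (Re x) \<and> 0 \<le> Re x \<and> Re x \<le> real (card A) / real (n choose m)"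
proof -
  let ?s = "av_pi n (projector psi)"
  let ?G = "{g. g permutes {..<n}}"
  let ?d = "(2::nat)^n"
  have drow: "dim_row ?s = ?d" using sig_carrier by simp
  have v: "v \<in> carrier_vec ?d" "v \<noteq> 0\<^sub>v ?d" "?s *\<^sub>v v = x \<cdot>\<^sub>v v"
    using ev drow unfolding eigenvector_def by auto
  have dv: "dim_vec v = ?d" using v(1) by simp
  define t where "t g = tau n (inv_into UNIV g)" for g
  define S where "S g = (\<Sum>r=0..<?d. cnj (v$r) * psi$(t g r))" for g
  define N where "N = (\<Sum>r=0..<?d. (cmod (v$r))^2)"
  define R where "R = (1 / real (fact n)) * (\<Sum>g\<in>?G. (cmod (S g))^2)"
  have row: "x * v$r = (\<Sum>c=0..<?d. ?s $$ (r, c) * v$c)" if r: "r < ?d" for r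
  proof -
    have "x * v$r = (?s *\<^sub>v v) $ r" using v(3) r dv by simp
    also have "\<dots> = (\<Sum>c=0..<?d. ?s $$ (r, c) * v$c)"
      using r drow dv sig_carrier by (simp add: scalar_prod_def)
    finally show ?thesis .
  qed
  have lhs: "(\<Sum>r=0..<?d. cnj (v$r) * (x * v$r)) = x * complex_of_real N"
  proof -
    have "complex_of_real N = (\<Sum>r=0..<?d. v$r * cnj (v$r))"
      unfolding N_def of_real_sum by (intro sum.cong refl complex_norm_square)
    then show ?thesis by (simp add: sum_distrib_left mult_ac)
  qed
  have rhs: "(\<Sum>r=0..<?d. cnj (v$r) * (\<Sum>c=0..<?d. ?s $$ (r, c) * v$c)) = complex_of_real R"
  proof -
    define k :: complex where "k = 1 / of_nat (fact n)"
    define a where "a g r = cnj (v$r) * psi$(t g r)" for g r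
    define b where "b g c = v$c * cnj (psi$(t g c))" for g c
    have step1: "cnj (v$r) * (\<Sum>c=0..<?d. ?s $$ (r, c) * v$c) = (\<Sum>c=0..<?d. \<Sum>g\<in>?G. k * (a g r * b g c))"
      if r: "r < ?d" for r
    proof -
      have "cnj (v$r) * (\<Sum>c=0..<?d. ?s $$ (r, c) * v$c) = (\<Sum>c=0..<?d. cnj (v$r) * (?s $$ (r, c) * v$c))"
        by (rule sum_distrib_left)
      also have "\<dots> = (\<Sum>c=0..<?d. \<Sum>g\<in>?G. k * (a g r * b g c))"
      proof (intro sum.cong refl)
        fix c assume c: "c \<in> {0..<?d}"
        have "?s $$ (r, c) = k * (\<Sum>g\<in>?G. psi$(t g r) * cnj (psi$(t g c)))"
          using r c by (simp add: av_index[OF dpsi] t_def k_def)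
        then have "cnj (v$r) * (?s $$ (r, c) * v$c) = cnj (v$r) * ((k * (\<Sum>g\<in>?G. psi$(t g r) * cnj (psi$(t g c)))) * v$c)"
          by simp
        also have "\<dots> = (\<Sum>g\<in>?G. cnj (v$r) * ((k * (psi$(t g r) * cnj (psi$(t g c)))) * v$c))"
          by (simp only: sum_distrib_left sum_distrib_right)
        also have "\<dots> = (\<Sum>g\<in>?G. k * (a g r * b g c))"
          by (intro sum.cong refl) (simp add: a_def b_def mult_ac)
        finally show "cnj (v$r) * (?s $$ (r, c) * v$c) = (\<Sum>g\<in>?G. k * (a g r * b g c))" .
      qed
      finally show ?thesis .
    qed
    have "(\<Sum>r=0..<?d. cnj (v$r) * (\<Sum>c=0..<?d. ?s $$ (r, c) * v$c))
        = (\<Sum>r=0..<?d. \<Sum>c=0..<?d. \<Sum>g\<in>?G. k * (a g r * b g c))"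
      using step1 by (intro sum.cong refl) auto
    also have "\<dots> = k * (\<Sum>r=0..<?d. \<Sum>c=0..<?d. \<Sum>g\<in>?G. a g r * b g c)"
      by (simp only: sum_distrib_left)
    also have "(\<Sum>r=0..<?d. \<Sum>c=0..<?d. \<Sum>g\<in>?G. a g r * b g c) = (\<Sum>r=0..<?d. \<Sum>g\<in>?G. \<Sum>c=0..<?d. a g r * b g c)"
      by (intro sum.cong refl) (rule sum.swap)
    also have "\<dots> = (\<Sum>g\<in>?G. \<Sum>r=0..<?d. \<Sum>c=0..<?d. a g r * b g c)"
      by (rule sum.swap)
    also have "\<dots> = (\<Sum>g\<in>?G. S g * cnj (S g))"
    proof (intro sum.cong refl)
      fix g
      have "cnj (S g) = (\<Sum>c=0..<?d. b g c)" by (simp add: S_def b_def)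
      then show "(\<Sum>r=0..<?d. \<Sum>c=0..<?d. a g r * b g c) = S g * cnj (S g)"
        by (simp add: S_def a_def[symmetric] sum_product)
    qed
    also have "k * (\<Sum>g\<in>?G. S g * cnj (S g)) = complex_of_real R"
      by (simp add: R_def k_def complex_norm_square[symmetric])
    finally show ?thesis .
  qed
  have xNR: "x * complex_of_real N = complex_of_real R"
  proof -
    have "(\<Sum>r=0..<?d. cnj (v$r) * (x * v$r)) = (\<Sum>r=0..<?d. cnj (v$r) * (\<Sum>c=0..<?d. ?s $$ (r, c) * v$c))"
      using row by (intro sum.cong) auto
    then show ?thesis using lhs rhs by simp
  qed
  have Npos: "N > 0"
  proof -
    have "\<exists>r<?d. v$r \<noteq> 0"
    proof (rule ccontr)
      assume "\<not> (\<exists>r<?d. v$r \<noteq> 0)"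
      then have "v = 0\<^sub>v ?d" using dv by (intro eq_vecI) auto
      with v(2) show False by simp
    qed
    then obtain r where r: "r < ?d" "v$r \<noteq> 0" by blast
    have "(cmod (v$r))^2 \<le> N" unfolding N_def
      by (rule member_le_sum[of r]) (use r in auto)
    moreover have "(cmod (v$r))^2 > 0" using r by simp
    ultimately show ?thesis by linarith
  qed
  have Rnn: "R \<ge> 0" unfolding R_def by (intro mult_nonneg_nonneg sum_nonneg) auto
  have xval: "x = complex_of_real (R / N)"
    using xNR Npos by (simp add: field_simps of_real_divide)
  have ReX: "Re x = R / N" using xval by simp
  define f where "f y = (cmod (v$y))^2" for y
  let ?C = "n choose m"
  have Cpos: "?C > 0" using mn by simp
  have Sg: "(cmod (S g))^2 \<le> (\<Sum>a\<in>A. f (tau n g a))" if g: "g \<in> ?G" for g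
  proof -
    have gp: "g permutes {..<n}" using g by simp
    have "S g = (\<Sum>a=0..<?d. cnj (v$(tau n g a)) * psi$(t g (tau n g a)))"
      unfolding S_def atLeast0LessThan
      using sum.reindex_bij_betw[OF tau_bij[OF gp], of "\<lambda>r. cnj (v$r) * psi$(t g r)"] by simp
    also have "\<dots> = (\<Sum>a=0..<?d. cnj (v$(tau n g a)) * psi$a)"
      by (intro sum.cong) (auto simp: t_def tau_inv_tau[OF gp])
    also have "\<dots> = (\<Sum>a=0..<?d. if a \<in> A then cnj (v$(tau n g a)) * complex_of_real al else 0)"
      by (intro sum.cong) (auto simp: psiA)
    also have "\<dots> = (\<Sum>a\<in>{0..<?d} \<inter> A. cnj (v$(tau n g a)) * complex_of_real al)"
      by (rule sym, rule sum.inter_restrict) simp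
    also have "{0..<?d} \<inter> A = A" using Asub by auto
    finally have SgA: "S g = (\<Sum>a\<in>A. cnj (v$(tau n g a)) * complex_of_real al)" .
    have "cmod (S g) \<le> (\<Sum>a\<in>A. cmod (cnj (v$(tau n g a)) * complex_of_real al))"
      unfolding SgA by (rule norm_sum)
    also have "\<dots> = al * (\<Sum>a\<in>A. cmod (v$(tau n g a)))"
      using alpos by (simp add: norm_mult sum_distrib_left mult_ac)
    finally have n1: "cmod (S g) \<le> al * (\<Sum>a\<in>A. cmod (v$(tau n g a)))" .
    have "(cmod (S g))^2 \<le> (al * (\<Sum>a\<in>A. cmod (v$(tau n g a))))^2"
      using n1 by (intro power_mono) auto
    also have "\<dots> = al^2 * (\<Sum>a\<in>A. cmod (v$(tau n g a)))^2" by (simp add: power_mult_distrib)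
    also have "\<dots> \<le> al^2 * (real (card A) * (\<Sum>a\<in>A. (cmod (v$(tau n g a)))^2))"
      by (intro mult_left_mono cs_sum finA) auto
    also have "\<dots> = (\<Sum>a\<in>A. f (tau n g a))"
      using alA by (simp add: f_def mult.assoc[symmetric])
    finally show ?thesis .
  qed
  have fa: "(\<Sum>g\<in>?G. f (tau n g a)) \<le> real (fact n) * N / real ?C" if a: "a \<in> A" for a
  proof -
    have a2: "a < ?d" using a Asub by auto
    have wa: "weight n a = m" using Aw a by simp
    have "real (card {i. i < ?d \<and> weight n i = weight n a}) * (\<Sum>g\<in>?G. f (tau n g a))
        = fact n * (\<Sum>y\<in>{i. i < ?d \<and> weight n i = weight n a}. f y)"
      by (rule sum_perm_tau[OF a2])
    moreover have "card {i. i < ?d \<and> weight n i = weight n a} = ?C" using card_weight wa by simp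
    moreover have "(\<Sum>y\<in>{i. i < ?d \<and> weight n i = weight n a}. f y) \<le> N"
      unfolding N_def f_def atLeast0LessThan by (rule sum_mono2) auto
    ultimately have e: "real ?C * (\<Sum>g\<in>?G. f (tau n g a)) = fact n * (\<Sum>y\<in>{i. i < ?d \<and> weight n i = weight n a}. f y)"
      and le: "(\<Sum>y\<in>{i. i < ?d \<and> weight n i = weight n a}. f y) \<le> N" by simp_all
    have "fact n * (\<Sum>y\<in>{i. i < ?d \<and> weight n i = weight n a}. f y) \<le> fact n * N"
      using le by (rule mult_left_mono) simp
    then have "real ?C * (\<Sum>g\<in>?G. f (tau n g a)) \<le> fact n * N" using e by simp
    then show ?thesis using Cpos by (simp add: field_simps)
  qed
  have "(\<Sum>g\<in>?G. (cmod (S g))^2) \<le> (\<Sum>g\<in>?G. \<Sum>a\<in>A. f (tau n g a))"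
    by (rule sum_mono) (rule Sg)
  also have "\<dots> = (\<Sum>a\<in>A. \<Sum>g\<in>?G. f (tau n g a))" by (rule sum.swap)
  also have "\<dots> \<le> (\<Sum>a\<in>A. real (fact n) * N / real ?C)" by (rule sum_mono) (rule fa)
  also have "\<dots> = real (card A) * real (fact n) * N / real ?C" by simp
  finally have "R \<le> real (card A) * N / real ?C"
    unfolding R_def by (simp add: field_simps)
  then have "R / N \<le> real (card A) / real ?C" using Npos by (simp add: field_simps)
  then show ?thesis using ReX xval Rnn Npos by simp
qed

end



definition mtr :: "complex mat \<Rightarrow> complex" where
  "mtr M = (\<Sum>i=0..<dim_row M. M $$ (i, i))"

lemma mtr_mult_expand:
  assumes "X \<in> carrier_mat d d" "Y \<in> carrier_mat d d"
  shows "mtr (X * Y) = (\<Sum>i=0..<d. \<Sum>j=0..<d. X $$ (i, j) * Y $$ (j, i))"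
  unfolding mtr_def using assms by (intro sum.cong) (auto simp: scalar_prod_def)

lemma mtr_comm:
  assumes X: "X \<in> carrier_mat d d" and Y: "Y \<in> carrier_mat d d"
  shows "mtr (X * Y) = mtr (Y * X)"
proof -
  have "mtr (X * Y) = (\<Sum>i=0..<d. \<Sum>j=0..<d. X $$ (i, j) * Y $$ (j, i))" by (rule mtr_mult_expand[OF X Y])
  also have "\<dots> = (\<Sum>j=0..<d. \<Sum>i=0..<d. X $$ (i, j) * Y $$ (j, i))" by (rule sum.swap)
  also have "\<dots> = (\<Sum>j=0..<d. \<Sum>i=0..<d. Y $$ (j, i) * X $$ (i, j))" by (simp add: mult.commute)
  also have "\<dots> = mtr (Y * X)" by (rule mtr_mult_expand[OF Y X, symmetric])
  finally show ?thesis .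
qed

lemma mtr_similar:
  assumes "similar_mat_wit A B P Q" and A: "A \<in> carrier_mat d d"
  shows "mtr A = mtr B"
proof -
  have c: "B \<in> carrier_mat d d" "P \<in> carrier_mat d d" "Q \<in> carrier_mat d d" "Q * P = 1\<^sub>m d" "A = P * B * Q"
    using assms unfolding similar_mat_wit_def Let_def by auto
  have "mtr A = mtr ((P * B) * Q)" using c by simp
  also have "\<dots> = mtr (Q * (P * B))" using c by (intro mtr_comm) auto
  also have "Q * (P * B) = (Q * P) * B" using c by (intro assoc_mult_mat[symmetric]) auto
  also have "\<dots> = B" using c by (simp add: left_mult_one_mat)
  finally show ?thesis .
qed

lemma proots_lin: "proots (\<Prod>a\<leftarrow>as. [:- a, 1:]) = mset (as :: complex list)"
proof (induction as)
  case Nil then show ?case by simp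
next
  case (Cons a as)
  have nz: "(\<Prod>a\<leftarrow>as. [:- a, 1:]) \<noteq> 0" by (auto simp: prod_list_zero_iff)
  have "(\<Prod>a\<leftarrow>a # as. [:- a, 1:]) = [:- a, 1:] * (\<Prod>a\<leftarrow>as. [:- a, 1:])" by simp
  also have "proots \<dots> = proots [:- a, 1:] + proots (\<Prod>a\<leftarrow>as. [:- a, 1:])"
    using nz by (intro proots_mult) auto
  finally show ?case using Cons by simp
qed

lemma sum_list_Re_mult: "sum_list (map (\<lambda>x. Re x * k) xs) = Re (sum_list xs) * k"
  by (induction xs) (auto simp: algebra_simps)

lemma ent_pointwise:
  fixes t c :: real
  assumes "0 \<le> t" "t \<le> c" "c > 0"
  shows "t * (- ln c) \<le> - (t * ln t)"
proof (cases "t = 0")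
  case True then show ?thesis by simp
next
  case False
  then have "t > 0" using assms by simp
  then have "ln t \<le> ln c" using assms by simp
  then show ?thesis using \<open>t > 0\<close> by (simp add: mult_left_mono)
qed

lemma entropy_lower:
  fixes M :: "complex mat"
  assumes M: "M \<in> carrier_mat d d"
  and ev: "\<And>v x. eigenvector M v x \<Longrightarrow> x = complex_of_real (Re x) \<and> 0 \<le> Re x \<and> Re x \<le> c"
  and tr: "(\<Sum>i=0..<d. M $$ (i, i)) = 1"
  and c: "c > 0"
  shows "vn_entropy M \<ge> - ln c"
proof -
  obtain as where cp: "char_poly M = (\<Prod>a\<leftarrow>as. [:- a, 1:])" and las: "length as = d"
    using char_poly_factorized[OF M] by blast
  have pr: "proots (char_poly M) = mset as" using cp proots_lin by simp
  have evs: "x = complex_of_real (Re x) \<and> 0 \<le> Re x \<and> Re x \<le> c" if x: "x \<in> set as" for x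
  proof -
    have "poly (char_poly M) x = 0" unfolding cp
      using x by (auto simp: poly_prod_list prod_list_zero_iff)
    then have "eigenvalue M x" using eigenvalue_root_char_poly[OF M] by simp
    then obtain v where "eigenvector M v x" unfolding eigenvalue_def by blast
    then show ?thesis using ev by blast
  qed
  obtain B P Q where sd: "schur_decomposition M as = (B, P, Q)" by (cases "schur_decomposition M as") auto
  from schur_decomposition[OF M cp sd]
  have sim: "similar_mat_wit M B P Q" and dB: "diag_mat B = as" by auto
  have "mtr M = mtr B" by (rule mtr_similar[OF sim M])
  also have "mtr B = sum_list (diag_mat B)"
    unfolding mtr_def diag_mat_def by (simp add: sum_set_upt_conv_sum_list_nat[symmetric])
  finally have "sum_list as = 1" using tr M dB by (simp add: mtr_def)
  then have s1: "Re (sum_list as) = 1" by simp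
  have "vn_entropy M = sum_list (map (\<lambda>x. - (Re x * ln (Re x))) as)"
    unfolding vn_entropy_def pr by (simp add: sum_mset_sum_list[symmetric])
  also have "\<dots> \<ge> sum_list (map (\<lambda>x. Re x * (- ln c)) as)"
  proof (rule sum_list_mono)
    fix x assume "x \<in> set as"
    then have "0 \<le> Re x" "Re x \<le> c" using evs by auto
    then show "Re x * (- ln c) \<le> - (Re x * ln (Re x))" by (rule ent_pointwise[OF _ _ c])
  qed
  also have "sum_list (map (\<lambda>x. Re x * (- ln c)) as) = - ln c"
    using sum_list_Re_mult[of "- ln c" as] s1 by simp
  finally show ?thesis .
qed

lemma rho_mix_entropy:
  assumes ba: "b \<le> a"
  shows "vn_entropy (rho_mix a b) = ln (real (a choose b))"
proof -
  let ?R = "rho_mix a b"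
  let ?C = "real (a choose b)"
  have Cpos: "?C > 0" using ba by simp
  have cR: "?R \<in> carrier_mat (2^a) (2^a)" by (simp add: rho_mix_def)
  have ut: "upper_triangular ?R" unfolding upper_triangular_def by (simp add: rho_mix_def)
  have cp: "char_poly ?R = (\<Prod>x\<leftarrow>diag_mat ?R. [:- x, 1:])"
    by (rule char_poly_upper_triangular[OF cR ut])
  have pr: "proots (char_poly ?R) = mset (diag_mat ?R)" using cp proots_lin by simp
  define f where "f x = - (Re x * ln (Re x))" for x :: complex
  have "vn_entropy ?R = sum_list (map f (diag_mat ?R))"
    unfolding vn_entropy_def pr f_def by (simp add: sum_mset_sum_list[symmetric])
  also have "\<dots> = (\<Sum>i=0..<2^a. f (?R $$ (i, i)))"
    unfolding diag_mat_def using cR by (simp add: sum_set_upt_conv_sum_list_nat[symmetric] comp_def)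
  also have "\<dots> = (\<Sum>i=0..<2^a. if weight a i = b then ln ?C / ?C else 0)"
  proof (intro sum.cong refl)
    fix i :: nat assume i: "i \<in> {0..<2^a}"
    show "f (?R $$ (i, i)) = (if weight a i = b then ln ?C / ?C else 0)"
      using i Cpos by (simp add: rho_mix_def f_def ln_div)
  qed
  also have "\<dots> = (\<Sum>i\<in>{0..<2^a} \<inter> {i. weight a i = b}. ln ?C / ?C)"
    by (simp only: sum.inter_restrict[OF finite_atLeastLessThan] mem_Collect_eq)
  also have "{0..<2^a} \<inter> {i. weight a i = b} = {i. i < 2^a \<and> weight a i = b}" by auto
  also have "(\<Sum>i\<in>{i. i < 2^a \<and> weight a i = b}. ln ?C / ?C) = ?C * (ln ?C / ?C)"
    by (simp add: card_weight)
  also have "\<dots> = ln ?C" using Cpos by simp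
  finally show ?thesis .
qed




theorem mainTheorem3:
  fixes n m k l :: nat
  assumes "l \<le> k" and "k \<le> n" and "l \<le> m" and "int k - int l \<le> int n - int m"
  defines "M \<equiv> m - l" and "N \<equiv> n - m - (k - l)"
  shows "vn_entropy (av_pi n (projector (Xi_vec n m k l)))
           \<ge> vn_entropy (rho_mix n m) - vn_entropy (rho_mix (N + M) M)
       \<and> vn_entropy (rho_mix n m) - vn_entropy (rho_mix (N + M) M)
           = ln (real (n choose m)) - ln (real ((n - k) choose (m - l)))"
proof -
  note lk = assms(1) and kn = assms(2) and lm = assms(3)
  have mn: "m \<le> n" using assms(1,4) by linarith
  have klnm: "k - l \<le> n - m" using assms(1,4) mn by linarith
  note H = lk kn lm klnm mn
  have NMe: "N + M = n - k" unfolding N_def M_def by (rule NM[OF H])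
  have Mle: "M \<le> n - k" using NMe by linarith
  have e1: "vn_entropy (rho_mix n m) = ln (real (n choose m))" by (rule rho_mix_entropy[OF mn])
  have e2: "vn_entropy (rho_mix (N + M) M) = ln (real ((n - k) choose (m - l)))"
    unfolding NMe using rho_mix_entropy[OF Mle] by (simp add: M_def)
  have second: "vn_entropy (rho_mix n m) - vn_entropy (rho_mix (N + M) M)
           = ln (real (n choose m)) - ln (real ((n - k) choose (m - l)))" using e1 e2 by simp
  let ?psi = "Xi_vec n m k l"
  let ?A = "AA n m k l"
  let ?CC = "CC n m k l"
  let ?al = "1 / sqrt (real ?CC)"
  have Cpos: "?CC > 0" by (rule CC_pos[OF H])
  have dpsi: "dim_vec ?psi = 2^n" by (rule dim_psi[OF H])
  have psiA: "\<And>a. a < 2^n \<Longrightarrow> ?psi $ a = (if a \<in> ?A then complex_of_real ?al else 0)"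
    by (rule psi_index[OF H])
  have Asub: "?A \<subseteq> {..<2^n}" by (rule AA_sub[OF H])
  have Aw: "\<And>a. a \<in> ?A \<Longrightarrow> weight n a = m" by (rule AA_weight[OF H])
  have alpos: "?al > 0" using Cpos by simp
  have cardA: "card ?A = ?CC" by (rule card_AA[OF H])
  have alA: "?al^2 * real (card ?A) = 1" using Cpos cardA by (simp add: power_divide)
  have Cnm: "real (n choose m) > 0" using mn by simp
  define c where "c = real ?CC / real (n choose m)"
  have cpos: "c > 0" unfolding c_def using Cpos Cnm by simp
  have ent: "vn_entropy (av_pi n (projector ?psi)) \<ge> - ln c"
  proof (rule entropy_lower[OF av_carrier[OF dpsi]])
    fix v x assume "eigenvector (av_pi n (projector ?psi)) v x"
    from eig_bound[OF dpsi psiA Asub Aw alpos alA this]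
    show "x = complex_of_real (Re x) \<and> 0 \<le> Re x \<and> Re x \<le> c"
      unfolding c_def cardA by simp
  next
    show "(\<Sum>i=0..<2^n. av_pi n (projector ?psi) $$ (i, i)) = 1"
      by (rule trace_sig[OF dpsi psiA Asub Aw alpos alA])
  next
    show "c > 0" by (rule cpos)
  qed
  have "- ln c = ln (real (n choose m)) - ln (real ((n - k) choose (m - l)))"
    unfolding c_def using Cpos Cnm by (simp add: ln_div CC_def[OF H])
  then show ?thesis using ent second by simp
qed

end
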